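(* Let $G$ be a graph, $n\ge1$, $v_0\in G$, $\mathbf{v}_0=(v_0,\dots,v_0)\in G^n$ and $\mathbf{x}_0=v_0^n\in G^{(n)}$. Let $\eta:G^n\to G^{(n)}$ be the graph map $\eta(v_1,\dots,v_n)=v_1\cdots v_n$. Then the induced homomorphism $\eta_*:A_1(G^n,\mathbf{v}_0)\to A_1(G^{(n)},\mathbf{x}_0)$, $[f]\mapsto[\eta\circ f]$, is surjective.
   Context: All graphs are connected, simple and locally finite. $G^n$ is the Cartesian (box) product graph; $G^{(n)}$ is the $n$th reduced power (vertices: degree-$n$ monomials in vertices of $G$, adjacent iff they differ by moving one token along one edge of $G$). $A_1(K,w_0)$ is the discrete fundamental group: classes of graph maps $f:\mathbb{Z}\to K$ from the integer path graph with $f(i)=w_0$ for $|i|$ large, modulo based homotopy (graph maps $\mathbb{Z}\,\square\,I_m\to K$ with based rows interpolating), with concatenation as product. *)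

theory Defs
  imports Main "HOL-Library.Multiset"
begin

definition simple_graph :: "'a set \<Rightarrow> ('a \<Rightarrow> 'a \<Rightarrow> bool) \<Rightarrow> bool" where
  "simple_graph V E \<longleftrightarrow>
     (\<forall>x y. E x y \<longrightarrow> x \<in> V \<and> y \<in> V) \<and>
     (\<forall>x y. E x y \<longrightarrow> E y x) \<and> (\<forall>x. \<not> E x x)"

definition connected_graph :: "'a set \<Rightarrow> ('a \<Rightarrow> 'a \<Rightarrow> bool) \<Rightarrow> bool" where
  "connected_graph V E \<longleftrightarrow> V \<noteq> {} \<and> (\<forall>x\<in>V. \<forall>y\<in>V. (E\<^sup>*\<^sup>*) x y)"

definition locally_finite :: "'a set \<Rightarrow> ('a \<Rightarrow> 'a \<Rightarrow> bool) \<Rightarrow> bool" where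
  "locally_finite V E \<longleftrightarrow> (\<forall>x\<in>V. finite {y. E x y})"

definition graph_map :: "'a set \<Rightarrow> ('a \<Rightarrow> 'a \<Rightarrow> bool) \<Rightarrow> 'b set \<Rightarrow> ('b \<Rightarrow> 'b \<Rightarrow> bool)
    \<Rightarrow> ('a \<Rightarrow> 'b) \<Rightarrow> bool" where
  "graph_map V E W F f \<longleftrightarrow> (\<forall>x\<in>V. f x \<in> W) \<and>
     (\<forall>x\<in>V. \<forall>y\<in>V. E x y \<longrightarrow> f x = f y \<or> F (f x) (f y))"

definition cart_pow_V :: "'a set \<Rightarrow> nat \<Rightarrow> 'a list set" where
  "cart_pow_V V n = {xs. length xs = n \<and> set xs \<subseteq> V}"

definition cart_pow_E :: "('a \<Rightarrow> 'a \<Rightarrow> bool) \<Rightarrow> 'a list \<Rightarrow> 'a list \<Rightarrow> bool" where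
  "cart_pow_E E xs ys \<longleftrightarrow> (\<exists>i<length xs. \<exists>y. E (xs ! i) y \<and> ys = xs[i := y])"

text \<open>Reduced power G^(n): vertices are degree-n monomials (multisets of size n).\<close>
definition red_pow_V :: "'a set \<Rightarrow> nat \<Rightarrow> 'a multiset set" where
  "red_pow_V V n = {M. size M = n \<and> set_mset M \<subseteq> V}"

definition red_pow_E :: "('a \<Rightarrow> 'a \<Rightarrow> bool) \<Rightarrow> 'a multiset \<Rightarrow> 'a multiset \<Rightarrow> bool" where
  "red_pow_E E M N \<longleftrightarrow> (\<exists>u v. u \<in># M \<and> E u v \<and> N = M - {#u#} + {#v#})"

definition int_adj :: "int \<Rightarrow> int \<Rightarrow> bool" where
  "int_adj i j \<longleftrightarrow> \<bar>i - j\<bar> = 1"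

definition based_loops :: "'b set \<Rightarrow> ('b \<Rightarrow> 'b \<Rightarrow> bool) \<Rightarrow> 'b \<Rightarrow> (int \<Rightarrow> 'b) set" where
  "based_loops W F w0 = {f. graph_map UNIV int_adj W F f \<and>
       (\<exists>N::nat. \<forall>i. \<bar>i\<bar> \<ge> int N \<longrightarrow> f i = w0)}"

text \<open>Based homotopy: a graph map Z \<box> I_m \<rightarrow> K whose rows are based loops,
  interpolating from f (row 0) to g (row m).\<close>
definition based_homotopic :: "'b set \<Rightarrow> ('b \<Rightarrow> 'b \<Rightarrow> bool) \<Rightarrow> 'b
    \<Rightarrow> (int \<Rightarrow> 'b) \<Rightarrow> (int \<Rightarrow> 'b) \<Rightarrow> bool" where
  "based_homotopic W F w0 f g \<longleftrightarrow>
     (\<exists>(m::nat) (H :: int \<Rightarrow> nat \<Rightarrow> 'b).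
        (\<forall>i. H i 0 = f i) \<and> (\<forall>i. H i m = g i) \<and>
        (\<forall>j\<le>m. (\<lambda>i. H i j) \<in> based_loops W F w0) \<and>
        (\<forall>i. \<forall>j<m. H i j = H i (Suc j) \<or> F (H i j) (H i (Suc j))))"

definition A1 :: "'b set \<Rightarrow> ('b \<Rightarrow> 'b \<Rightarrow> bool) \<Rightarrow> 'b \<Rightarrow> (int \<Rightarrow> 'b) set set" where
  "A1 W F w0 = based_loops W F w0 //
      {(f, g). f \<in> based_loops W F w0 \<and> g \<in> based_loops W F w0 \<and> based_homotopic W F w0 f g}"

definition A1_class :: "'b set \<Rightarrow> ('b \<Rightarrow> 'b \<Rightarrow> bool) \<Rightarrow> 'b \<Rightarrow> (int \<Rightarrow> 'b) \<Rightarrow> (int \<Rightarrow> 'b) set" where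
  "A1_class W F w0 f = {g \<in> based_loops W F w0. based_homotopic W F w0 f g}"

end

theory Submission
  imports Defs
begin

definition lstep :: "('a \<Rightarrow> 'a \<Rightarrow> bool) \<Rightarrow> 'a list \<Rightarrow> 'a multiset \<Rightarrow> 'a list" where
  "lstep E xs M' = (if mset xs = M' then xs else SOME ys. cart_pow_E E xs ys \<and> mset ys = M')"

primrec liftL :: "('a \<Rightarrow> 'a \<Rightarrow> bool) \<Rightarrow> 'a list \<Rightarrow> (nat \<Rightarrow> 'a multiset) \<Rightarrow> nat \<Rightarrow> 'a list" where
  "liftL E x0 h 0 = x0"
| "liftL E x0 h (Suc k) = lstep E (liftL E x0 h k) (h (Suc k))"

lemma step_lift:
  assumes "red_pow_E E (mset xs) M'"
  shows "\<exists>ys. cart_pow_E E xs ys \<and> mset ys = M'"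
proof -
  obtain u v where u: "u \<in># mset xs" "E u v" "M' = mset xs - {#u#} + {#v#}"
    using assms unfolding red_pow_E_def by blast
  then obtain i where i: "i < length xs" "xs ! i = u" by (metis in_set_conv_nth set_mset_mset)
  have "mset (xs[i := v]) = M'" using i u by (simp add: mset_update)
  moreover have "cart_pow_E E xs (xs[i := v])" unfolding cart_pow_E_def using i u by blast
  ultimately show ?thesis by blast
qed

lemma liftL_props:
  assumes "mset x0 = h 0" and "\<And>k. h k = h (Suc k) \<or> red_pow_E E (h k) (h (Suc k))"
  shows "mset (liftL E x0 h k) = h k \<and>
     (liftL E x0 h (Suc k) = liftL E x0 h k \<or> cart_pow_E E (liftL E x0 h k) (liftL E x0 h (Suc k)))"
proof (induction k)
  case 0
  show ?case
  proof (cases "h 0 = h (Suc 0)")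
    case True then show ?thesis using assms(1) by (simp add: lstep_def)
  next
    case False
    then have "red_pow_E E (mset x0) (h (Suc 0))" using assms by metis
    from someI_ex[OF step_lift[OF this]] show ?thesis using assms(1) False
      by (simp add: lstep_def)
  qed
next
  case (Suc k)
  have m: "mset (liftL E x0 h (Suc k)) = h (Suc k)"
  proof (cases "h k = h (Suc k)")
    case True then show ?thesis using Suc by (simp add: lstep_def)
  next
    case False
    then have "red_pow_E E (mset (liftL E x0 h k)) (h (Suc k))" using assms Suc by metis
    from someI_ex[OF step_lift[OF this]] show ?thesis using Suc False
      by (simp add: lstep_def)
  qed
  show ?case
  proof (cases "h (Suc k) = h (Suc (Suc k))")
    case True then show ?thesis using m by (simp add: lstep_def)
  next
    case False
    then have "red_pow_E E (mset (liftL E x0 h (Suc k))) (h (Suc (Suc k)))" using assms m by metis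
    from someI_ex[OF step_lift[OF this]] show ?thesis using m False
      by (simp add: lstep_def)
  qed
qed

lemma mset_repl: "mset xs = replicate_mset n v \<Longrightarrow> xs = replicate n v"
proof -
  assume a: "mset xs = replicate_mset n v"
  then have "length xs = n" by (metis size_mset size_replicate_mset)
  moreover have "\<forall>x\<in>set xs. x = v" using a
    by (metis in_replicate_mset set_mset_mset)
  ultimately show ?thesis by (metis replicate_length_same)
qed

lemma cart_sym: "(\<forall>x y. E x y \<longrightarrow> E y x) \<Longrightarrow> cart_pow_E E xs ys \<Longrightarrow> cart_pow_E E ys xs"
  unfolding cart_pow_E_def
  by (metis length_list_update list_update_overwrite list_update_id nth_list_update_eq)

theorem lemma4p5:
  fixes V :: "'a set" and E :: "'a \<Rightarrow> 'a \<Rightarrow> bool" and n :: nat and v0 :: 'a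
  assumes "simple_graph V E" and "connected_graph V E" and "locally_finite V E"
    and "n \<ge> 1" and "v0 \<in> V"
  shows "\<forall>c \<in> A1 (red_pow_V V n) (red_pow_E E) (replicate_mset n v0).
           \<exists>f \<in> based_loops (cart_pow_V V n) (cart_pow_E E) (replicate n v0).
             A1_class (red_pow_V V n) (red_pow_E E) (replicate_mset n v0) (mset \<circ> f) = c"
proof
  fix c
  let ?W = "red_pow_V V n" and ?F = "red_pow_E E" and ?w = "replicate_mset n v0"
  let ?BL = "based_loops ?W ?F ?w"
  assume "c \<in> A1 ?W ?F ?w"
  then obtain g where g: "g \<in> ?BL"
    and c: "c = {(f, g). f \<in> ?BL \<and> g \<in> ?BL \<and> based_homotopic ?W ?F ?w f g} `` {g}"
    unfolding A1_def quotient_def by blast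
  have cc: "c = A1_class ?W ?F ?w g" unfolding c A1_class_def using g by auto
  obtain N :: nat where N: "\<And>i. \<bar>i\<bar> \<ge> int N \<Longrightarrow> g i = ?w"
    using g unfolding based_loops_def by blast
  have gm: "graph_map UNIV int_adj ?W ?F g" using g unfolding based_loops_def by blast
  define h where "h = (\<lambda>k::nat. g (int k - int N))"
  define x0 where "x0 = replicate n v0"
  have h0: "mset x0 = h 0" unfolding h_def x0_def using N[of "- int N"] by simp
  have hs: "\<And>k. h k = h (Suc k) \<or> red_pow_E E (h k) (h (Suc k))"
  proof -
    fix k
    have "int_adj (int k - int N) (int (Suc k) - int N)" unfolding int_adj_def by simp
    then show "h k = h (Suc k) \<or> red_pow_E E (h k) (h (Suc k))"
      using gm unfolding graph_map_def h_def by blast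
  qed
  note P = liftL_props[OF h0 hs]
  define f where "f = (\<lambda>i::int. liftL E x0 h (nat (i + int N)))"
  have mf: "mset (f i) = g i" for i
  proof (cases "i + int N \<ge> 0")
    case True
    then show ?thesis using P[of "nat (i + int N)"] unfolding f_def h_def by simp
  next
    case False
    then have "nat (i + int N) = 0" by simp
    then show ?thesis using h0 N[of i] False unfolding f_def h_def x0_def by simp
  qed
  have sym: "\<forall>x y. E x y \<longrightarrow> E y x" using assms(1) unfolding simple_graph_def by blast
  have fin: "f \<in> based_loops (cart_pow_V V n) (cart_pow_E E) (replicate n v0)"
    unfolding based_loops_def
  proof (intro CollectI conjI)
    show "\<exists>N::nat. \<forall>i. \<bar>i\<bar> \<ge> int N \<longrightarrow> f i = replicate n v0"
      using N mf mset_repl by metis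
    show "graph_map UNIV int_adj (cart_pow_V V n) (cart_pow_E E) f"
      unfolding graph_map_def
    proof (intro conjI ballI impI)
      fix x
      have "g x \<in> ?W" using gm unfolding graph_map_def by blast
      then show "f x \<in> cart_pow_V V n" using mf[of x]
        unfolding red_pow_V_def cart_pow_V_def
        by (metis (mono_tags, lifting) mem_Collect_eq set_mset_mset size_mset)
    next
      fix x y :: int assume "int_adj x y"
      then have "y = x + 1 \<or> x = y + 1" unfolding int_adj_def by arith
      moreover have "f (a + 1) = f a \<or> cart_pow_E E (f a) (f (a + 1))" for a
      proof (cases "a + int N \<ge> 0")
        case True
        then have "nat (a + 1 + int N) = Suc (nat (a + int N))" by simp
        then show ?thesis using P[of "nat (a + int N)"] unfolding f_def by simp
      next
        case False
        then have "nat (a + 1 + int N) = 0" "nat (a + int N) = 0" by simp_all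
        then show ?thesis unfolding f_def by simp
      qed
      ultimately show "f x = f y \<or> cart_pow_E E (f x) (f y)"
        using cart_sym[OF sym] by metis
    qed
  qed
  have "mset \<circ> f = g" using mf by auto
  then show "\<exists>f \<in> based_loops (cart_pow_V V n) (cart_pow_E E) (replicate n v0).
             A1_class ?W ?F ?w (mset \<circ> f) = c" using fin cc by blast
qed

end
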